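(* Let $\mathbf{L}$ be a Euclidean modal logic and let $\mathcal{F}^{\rho}_{A,B}$ be a galaxy in $\mathcal{L}_2$. If $\mathbf{N}^{+}\times\{2\}\subseteq\mathtt{S}_{\mathbf{L}}$, then $\mathbf{L}$ is valid in $\mathcal{F}^{\rho}_{A,B}$.
   Context: A frame is a pair $(W,R)$ with $W$ non-empty and $R\subseteq W\times W$. Modal formulas (propositional variables, $\bot,\neg,\vee,\Box$) have standard Kripke semantics; validity means truth at all points under all valuations. A (normal) modal logic contains all tautologies and K axioms and is closed under uniform substitution, modus ponens and necessitation; a Euclidean modal logic is one not containing $\bot$ and containing $\Diamond\psi\to\Box\Diamond\psi$ for all $\psi$. For sets $A,B$ with $A\cap B=\emptyset$, $A\cup B\ne\emptyset$ and $\rho:A\to\wp(B)$, the galaxy $\mathcal{F}^{\rho}_{A,B}$ has universe $A\cup B$ and relation $\bigcup_{s\in A}(\{s\}\times\rho(s))\cup(B\times B)$. $\mathcal{L}_2$ is the class of galaxies with $|A|\ge4$, $|B|\ge4$ and $|B\setminus\rho(s)|=2$ for all $s\in A$. $\mathbf{N}^{+}=\{1,2,\dots\}$, $\mathbf{N}^{-}=\{-1,0,1,\dots\}$. For $m\in\mathbf{N}^{+}$, $n\ge0$, the flower $\mathcal{F}_m^n$ has universe $\{0,\dots,m+n\}$ and relation $(\{0\}\times\{1,\dots,m\})\cup\{1,\dots,m+n\}^2$; $\mathcal{F}_m^{-1}$ has universe $\{1,\dots,m\}$ and relation $\{1,\dots,m\}^2$. $\mathtt{S}_{\mathbf{L}}=\{(m,n)\in\mathbf{N}^{+}\times\mathbf{N}^{-}:\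 \mathbf{L}\text{ valid in }\mathcal{F}_m^n\}$. *)

theory Defs
  imports Main
begin

datatype fm = Var nat | Bot | Neg fm | Disj fm fm | Box fm

definition Imp :: "fm \<Rightarrow> fm \<Rightarrow> fm" where
  "Imp a b = Disj (Neg a) b"

definition Dia :: "fm \<Rightarrow> fm" where
  "Dia a = Neg (Box (Neg a))"

fun sat :: "'a set \<Rightarrow> ('a \<times> 'a) set \<Rightarrow> (nat \<Rightarrow> 'a set) \<Rightarrow> 'a \<Rightarrow> fm \<Rightarrow> bool" where
  "sat W R V w (Var p) = (w \<in> V p)"
| "sat W R V w Bot = False"
| "sat W R V w (Neg a) = (\<not> sat W R V w a)"
| "sat W R V w (Disj a b) = (sat W R V w a \<or> sat W R V w b)"
| "sat W R V w (Box a) = (\<forall>v\<in>W. (w, v) \<in> R \<longrightarrow> sat W R V v a)"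

definition valid_fm :: "'a set \<Rightarrow> ('a \<times> 'a) set \<Rightarrow> fm \<Rightarrow> bool" where
  "valid_fm W R a = (\<forall>V. \<forall>w\<in>W. sat W R V w a)"

definition valid_logic :: "fm set \<Rightarrow> 'a set \<Rightarrow> ('a \<times> 'a) set \<Rightarrow> bool" where
  "valid_logic L W R = (\<forall>a\<in>L. valid_fm W R a)"

fun peval :: "(fm \<Rightarrow> bool) \<Rightarrow> fm \<Rightarrow> bool" where
  "peval f (Var p) = f (Var p)"
| "peval f Bot = False"
| "peval f (Neg a) = (\<not> peval f a)"
| "peval f (Disj a b) = (peval f a \<or> peval f b)"
| "peval f (Box a) = f (Box a)"

definition tautology :: "fm \<Rightarrow> bool" where
  "tautology a = (\<forall>f. peval f a)"

fun subst :: "(nat \<Rightarrow> fm) \<Rightarrow> fm \<Rightarrow> fm" where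
  "subst s (Var p) = s p"
| "subst s Bot = Bot"
| "subst s (Neg a) = Neg (subst s a)"
| "subst s (Disj a b) = Disj (subst s a) (subst s b)"
| "subst s (Box a) = Box (subst s a)"

definition normal_logic :: "fm set \<Rightarrow> bool" where
  "normal_logic L =
    ((\<forall>a. tautology a \<longrightarrow> a \<in> L) \<and>
     (\<forall>a b. Imp (Box (Imp a b)) (Imp (Box a) (Box b)) \<in> L) \<and>
     (\<forall>s a. a \<in> L \<longrightarrow> subst s a \<in> L) \<and>
     (\<forall>a b. a \<in> L \<longrightarrow> Imp a b \<in> L \<longrightarrow> b \<in> L) \<and>
     (\<forall>a. a \<in> L \<longrightarrow> Box a \<in> L))"

definition euclidean_logic :: "fm set \<Rightarrow> bool" where
  "euclidean_logic L =
    (normal_logic L \<and> Bot \<notin> L \<and> (\<forall>a. Imp (Dia a) (Box (Dia a)) \<in> L))"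

definition galaxy_univ :: "'a set \<Rightarrow> 'a set \<Rightarrow> 'a set" where
  "galaxy_univ A B = A \<union> B"

definition galaxy_rel :: "'a set \<Rightarrow> 'a set \<Rightarrow> ('a \<Rightarrow> 'a set) \<Rightarrow> ('a \<times> 'a) set" where
  "galaxy_rel A B \<rho> = (\<Union>s\<in>A. {s} \<times> \<rho> s) \<union> (B \<times> B)"

definition is_galaxy :: "'a set \<Rightarrow> 'a set \<Rightarrow> ('a \<Rightarrow> 'a set) \<Rightarrow> bool" where
  "is_galaxy A B \<rho> = (A \<inter> B = {} \<and> A \<union> B \<noteq> {} \<and> (\<forall>s\<in>A. \<rho> s \<subseteq> B))"

text \<open>A set has at least n elements (works also for infinite sets).\<close>
definition at_least :: "nat \<Rightarrow> 'a set \<Rightarrow> bool" where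
  "at_least n X = (\<exists>F\<subseteq>X. finite F \<and> card F = n)"

definition in_L2 :: "'a set \<Rightarrow> 'a set \<Rightarrow> ('a \<Rightarrow> 'a set) \<Rightarrow> bool" where
  "in_L2 A B \<rho> = (is_galaxy A B \<rho> \<and> at_least 4 A \<and> at_least 4 B \<and>
                   (\<forall>s\<in>A. card (B - \<rho> s) = 2))"

definition flower_univ :: "nat \<Rightarrow> int \<Rightarrow> nat set" where
  "flower_univ m n = (if n = -1 then {1..m} else {0..m + nat n})"

definition flower_rel :: "nat \<Rightarrow> int \<Rightarrow> (nat \<times> nat) set" where
  "flower_rel m n = (if n = -1 then {1..m} \<times> {1..m}
                     else ({0} \<times> {1..m}) \<union> ({1..m + nat n} \<times> {1..m + nat n}))"

definition S_L :: "fm set \<Rightarrow> (nat \<times> int) set" where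
  "S_L L = {(m, n). m \<ge> 1 \<and> n \<ge> -1 \<and> valid_logic L (flower_univ m n) (flower_rel m n)}"

end

theory Submission
  imports Defs
begin

fun fvars :: "fm \<Rightarrow> nat set" where
  "fvars (Var p) = {p}"
| "fvars Bot = {}"
| "fvars (Neg a) = fvars a"
| "fvars (Disj a b) = fvars a \<union> fvars b"
| "fvars (Box a) = fvars a"

lemma finite_fvars: "finite (fvars a)"
  by (induction a) auto

lemma bm_truth:
  assumes fW: "\<forall>x\<in>D. f x \<in> W'" and DW: "D \<subseteq> W"
    and fwd: "\<forall>x\<in>D. \<forall>y\<in>W. (x,y)\<in>R \<longrightarrow> y \<in> D \<and> (f x, f y) \<in> R'"
    and bck: "\<forall>x\<in>D. \<forall>z\<in>W'. (f x, z) \<in> R' \<longrightarrow> (\<exists>y\<in>D. (x,y)\<in>R \<and> f y = z)"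
    and val: "\<forall>x\<in>D. \<forall>p\<in>fvars a. (x \<in> V p \<longleftrightarrow> f x \<in> V' p)"
    and xD: "x \<in> D"
  shows "sat W R V x a = sat W' R' V' (f x) a"
  using val xD
proof (induction a arbitrary: x)
  case (Box a)
  show ?case
  proof
    assume H: "sat W R V x (Box a)"
    show "sat W' R' V' (f x) (Box a)"
    proof (simp, intro ballI impI)
      fix z assume z: "z \<in> W'" "(f x, z) \<in> R'"
      then obtain y where y: "y \<in> D" "(x,y)\<in>R" "f y = z" using bck Box.prems by blast
      have "sat W R V y a" using H y DW by auto
      then show "sat W' R' V' z a" using Box.IH[of y] Box.prems y by auto
    qed
  next
    assume H: "sat W' R' V' (f x) (Box a)"
    show "sat W R V x (Box a)"
    proof (simp, intro ballI impI)
      fix y assume y: "y \<in> W" "(x, y) \<in> R"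
      then have "y \<in> D" "(f x, f y) \<in> R'" using fwd Box.prems by auto
      moreover have "f y \<in> W'" using fW \<open>y \<in> D\<close> by auto
      ultimately have "sat W' R' V' (f y) a" using H by auto
      then show "sat W R V y a" using Box.IH[of y] Box.prems \<open>y \<in> D\<close> by auto
    qed
  qed
qed auto


lemma flower2:
  "flower_univ m 2 = {0..m+2}"
  "flower_rel m 2 = ({0} \<times> {1..m}) \<union> ({1..m+2} \<times> {1..m+2})"
  by (simp_all add: flower_univ_def flower_rel_def)

lemma main_point:
  fixes A B :: "'a set" and \<rho> :: "'a \<Rightarrow> 'a set"
  assumes L2: "in_L2 A B \<rho>"
    and SL: "\<And>m::nat. m \<ge> 1 \<Longrightarrow> valid_fm {0..m+2} (({0} \<times> {1..m}) \<union> ({1..m+2} \<times> {1..m+2})) a"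
    and sA: "s \<in> A" and w: "w = s \<or> w \<in> B"
  shows "sat (galaxy_univ A B) (galaxy_rel A B \<rho>) V w a"
proof -
  have gal: "A \<inter> B = {}" "\<forall>s\<in>A. \<rho> s \<subseteq> B" and c2: "card (B - \<rho> s) = 2"
    and B4: "at_least 4 B"
    using L2 sA unfolding in_L2_def is_galaxy_def by auto
  obtain b1 b2 where bb: "B - \<rho> s = {b1, b2}" "b1 \<noteq> b2" using c2 card_2_iff by metis
  have rs: "\<rho> s \<subseteq> B" using gal sA by auto
  have sB: "s \<notin> B" using gal sA by auto
  have b12: "b1 \<in> B" "b2 \<in> B" "b1 \<notin> \<rho> s" "b2 \<notin> \<rho> s" using bb by auto
  have rne: "\<rho> s \<noteq> {}"
  proof
    assume e: "\<rho> s = {}"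
    obtain F where F: "F \<subseteq> B" "finite F" "card F = 4" using B4 unfolding at_least_def by auto
    have "F \<subseteq> {b1, b2}" using F e bb by auto
    then have "card F \<le> 2" by (metis card_2_iff bb(2) card_mono finite.emptyI finite_insert)
    then show False using F by simp
  qed
  define P where "P = fvars a"
  define \<tau> where "\<tau> x = {p\<in>P. x \<in> V p}" for x
  define T where "T = \<tau> ` \<rho> s"
  have finT: "finite T" unfolding T_def
    by (rule finite_subset[of _ "Pow P"]) (auto simp: \<tau>_def P_def finite_fvars)
  define m where "m = card T"
  have m1: "m \<ge> 1" using finT rne unfolding m_def T_def
    by (metis One_nat_def Suc_leI card_gt_0_iff image_is_empty)
  obtain e where e: "bij_betw e T {0..<m}" using ex_bij_betw_finite_nat[OF finT] m_def by auto
  define f where "f x = (if x = s then 0 else if x = b1 then m+1 else if x = b2 then m+2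
     else e (\<tau> x) + 1)" for x
  define D where "D = insert s B"
  define W' where "W' = {0..m+2}"
  define R' where "R' = ({0} \<times> {1..m}) \<union> ({1..m+2} \<times> {1..m+2})"
  define V' where "V' p = f ` (D \<inter> V p)" for p
  have fr: "x \<in> \<rho> s \<Longrightarrow> f x \<in> {1..m}" for x
  proof -
    assume x: "x \<in> \<rho> s"
    then have "x \<noteq> s" "x \<noteq> b1" "x \<noteq> b2" using rs sB b12 by auto
    moreover have "\<tau> x \<in> T" using x T_def by auto
    then have "e (\<tau> x) < m" using e bij_betwE by fastforce
    ultimately show ?thesis unfolding f_def by auto
  qed
  have fB: "x \<in> B \<Longrightarrow> f x \<in> {1..m+2}" for x
  proof -
    assume x: "x \<in> B"
    show ?thesis
    proof (cases "x \<in> \<rho> s")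
      case True then show ?thesis using fr[of x] by auto
    next
      case False then have "x = b1 \<or> x = b2" using bb x by auto
      then show ?thesis using sB x bb(2) unfolding f_def by auto
    qed
  qed
  have fs: "f s = 0" unfolding f_def by simp
  have Rg: "(x, y) \<in> galaxy_rel A B \<rho> \<longleftrightarrow> (x \<in> A \<and> y \<in> \<rho> x) \<or> (x \<in> B \<and> y \<in> B)" for x y
    unfolding galaxy_rel_def by auto
  have surjr: "z \<in> {1..m} \<Longrightarrow> \<exists>y\<in>\<rho> s. f y = z" for z
  proof -
    assume z: "z \<in> {1..m}"
    then have "z - 1 \<in> {0..<m}" by auto
    then obtain t where t: "t \<in> T" "e t = z - 1" using e bij_betw_imp_surj_on by (metis imageE)
    then obtain y where y: "y \<in> \<rho> s" "\<tau> y = t" using T_def by auto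
    have "y \<noteq> s" "y \<noteq> b1" "y \<noteq> b2" using y rs sB b12 by auto
    then have "f y = z" using y t z unfolding f_def by auto
    then show ?thesis using y by auto
  qed
  have fwd: "\<forall>x\<in>D. \<forall>y\<in>galaxy_univ A B. (x,y)\<in>galaxy_rel A B \<rho> \<longrightarrow> y \<in> D \<and> (f x, f y) \<in> R'"
  proof (intro ballI impI)
    fix x y assume x: "x \<in> D" and y: "y \<in> galaxy_univ A B" and r: "(x,y)\<in>galaxy_rel A B \<rho>"
    show "y \<in> D \<and> (f x, f y) \<in> R'"
    proof (cases "x = s")
      case True
      then have "y \<in> \<rho> s" using r Rg sB by auto
      then show ?thesis using True fr[of y] fs rs unfolding D_def R'_def by auto
    next
      case False
      then have "x \<in> B" using x D_def by auto
      then have "y \<in> B" using r Rg gal by auto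
      then show ?thesis using fB[of x] fB[of y] \<open>x \<in> B\<close> unfolding D_def R'_def by auto
    qed
  qed
  have bck: "\<forall>x\<in>D. \<forall>z\<in>W'. (f x, z) \<in> R' \<longrightarrow> (\<exists>y\<in>D. (x,y)\<in>galaxy_rel A B \<rho> \<and> f y = z)"
  proof (intro ballI impI)
    fix x z assume x: "x \<in> D" and z: "z \<in> W'" and r: "(f x, z) \<in> R'"
    show "\<exists>y\<in>D. (x,y)\<in>galaxy_rel A B \<rho> \<and> f y = z"
    proof (cases "x = s")
      case True
      then have "z \<in> {1..m}" using r fs unfolding R'_def by auto
      then obtain y where "y \<in> \<rho> s" "f y = z" using surjr by blast
      then show ?thesis using True rs sA Rg unfolding D_def by auto
    next
      case False
      then have xB: "x \<in> B" using x D_def by auto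
      have "z \<in> {1..m+2}" using r fB[OF xB] unfolding R'_def by auto
      then consider "z \<in> {1..m}" | "z = m+1" | "z = m+2" by fastforce
      then obtain y where y: "y \<in> B" "f y = z"
      proof cases
        case 1 then show ?thesis using surjr rs that by blast
      next
        case 2 then show ?thesis using that[of b1] b12 sB unfolding f_def by (metis Suc_eq_plus1)
      next
        case 3
        have "f b2 = m+2" using b12 sB bb(2) unfolding f_def by auto
        then show ?thesis using that[of b2] b12 3 by auto
      qed
      then show ?thesis using xB Rg unfolding D_def by auto
    qed
  qed
  have finj: "x \<in> D \<Longrightarrow> y \<in> D \<Longrightarrow> f x = f y \<Longrightarrow> \<tau> x = \<tau> y" for x y
  proof -
    assume x: "x \<in> D" and y: "y \<in> D" and eq: "f x = f y"
    have cl: "z \<in> D \<Longrightarrow> z = s \<or> z = b1 \<or> z = b2 \<or> z \<in> \<rho> s" for z using bb unfolding D_def by auto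
    have v: "z \<in> \<rho> s \<Longrightarrow> f z = e (\<tau> z) + 1 \<and> \<tau> z \<in> T \<and> z \<noteq> s \<and> z \<noteq> b1 \<and> z \<noteq> b2" for z
      using b12 rs sB T_def unfolding f_def by auto
    have lt: "t \<in> T \<Longrightarrow> e t < m" for t using e bij_betwE by fastforce
    have inj: "inj_on e T" using e bij_betw_def by auto
    have fxv: "z \<in> D \<Longrightarrow> (z = s \<and> f z = 0) \<or> (z = b1 \<and> f z = m+1) \<or> (z = b2 \<and> f z = m+2)
        \<or> (z \<in> \<rho> s \<and> f z = e (\<tau> z) + 1 \<and> e (\<tau> z) < m)" for z
    proof -
      assume "z \<in> D"
      then consider "z = s" | "z = b1" | "z = b2" | "z \<in> \<rho> s" using cl by blast
      then show ?thesis
      proof cases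
        case 1 then show ?thesis unfolding f_def by simp
      next
        case 2 then show ?thesis using sB b12 unfolding f_def by simp
      next
        case 3 then show ?thesis using sB b12 bb(2) unfolding f_def by simp
      next
        case 4 then show ?thesis using v[of z] lt[of "\<tau> z"] by simp
      qed
    qed
    from fxv[OF x] fxv[OF y] eq bb(2) have "x = y \<or> (x \<in> \<rho> s \<and> y \<in> \<rho> s \<and> e (\<tau> x) = e (\<tau> y))"
      by (elim disjE conjE; simp)
    then show ?thesis using v[of x] v[of y] inj_onD[OF inj, of "\<tau> x" "\<tau> y"] by auto
  qed
  have val: "\<forall>x\<in>D. \<forall>p\<in>fvars a. (x \<in> V p \<longleftrightarrow> f x \<in> V' p)"
  proof (intro ballI)
    fix x p assume x: "x \<in> D" and p: "p \<in> fvars a"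
    show "x \<in> V p \<longleftrightarrow> f x \<in> V' p"
    proof
      assume "x \<in> V p" then have "x \<in> D \<inter> V p" using x by simp
      then show "f x \<in> V' p" unfolding V'_def by (rule imageI)
    next
      assume "f x \<in> V' p"
      then obtain y0 where y0: "y0 \<in> D \<inter> V p" "f x = f y0" unfolding V'_def by (rule imageE)
      then have y: "y0 \<in> D" "y0 \<in> V p" "f y0 = f x" by auto
      have "\<tau> y0 = \<tau> x" by (rule finj[OF y(1) x y(3)])
      moreover have "p \<in> \<tau> y0" using y p unfolding \<tau>_def P_def by simp
      ultimately have "p \<in> \<tau> x" by simp
      then show "x \<in> V p" unfolding \<tau>_def by simp
    qed
  qed
  have fW: "\<forall>x\<in>D. f x \<in> W'" using fB fs unfolding D_def W'_def by fastforce
  have DW: "D \<subseteq> galaxy_univ A B" using sA unfolding D_def galaxy_univ_def by auto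
  have wD: "w \<in> D" using w D_def by auto
  have "sat (galaxy_univ A B) (galaxy_rel A B \<rho>) V w a = sat W' R' V' (f w) a"
    by (rule bm_truth[OF fW DW fwd bck val wD])
  moreover have "sat W' R' V' (f w) a" using SL[OF m1] fW wD unfolding valid_fm_def W'_def R'_def by auto
  ultimately show ?thesis by simp
qed

theorem lemma37:
  fixes L :: "fm set" and A B :: "'a set" and \<rho> :: "'a \<Rightarrow> 'a set"
  assumes "euclidean_logic L"
    and "in_L2 A B \<rho>"
    and "{m. m \<ge> 1} \<times> {2} \<subseteq> S_L L"
  shows "valid_logic L (galaxy_univ A B) (galaxy_rel A B \<rho>)"
  unfolding valid_logic_def
proof
  fix a assume aL: "a \<in> L"
  have SL: "valid_fm {0..m+2} (({0} \<times> {1..m}) \<union> ({1..m+2} \<times> {1..m+2})) a" if "m \<ge> 1" for m :: nat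
  proof -
    have "(m, 2::int) \<in> S_L L" using assms(3) that by auto
    then show ?thesis using aL flower2[of m] unfolding S_L_def valid_logic_def by auto
  qed
  have A4: "at_least 4 A" using assms(2) unfolding in_L2_def by auto
  then obtain s0 where s0: "s0 \<in> A" unfolding at_least_def by fastforce
  show "valid_fm (galaxy_univ A B) (galaxy_rel A B \<rho>) a"
    unfolding valid_fm_def
  proof (intro allI ballI)
    fix V w assume w: "w \<in> galaxy_univ A B"
    show "sat (galaxy_univ A B) (galaxy_rel A B \<rho>) V w a"
    proof (cases "w \<in> A")
      case True
      then show ?thesis using main_point[OF assms(2) SL True] by blast
    next
      case False
      then have "w \<in> B" using w unfolding galaxy_univ_def by auto
      then show ?thesis using main_point[OF assms(2) SL s0] by blast
    qed
  qed
qed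

end
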